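(* Let $0\le c\le (3-\sqrt5)/4$. For every graphon $W$, $$m_D(W)-\tfrac1{16}\ \ge\ c\left(m_{C_4}(W)-\tfrac18\right),$$ where $D=K_{1,1,2}$ is the diamond (the $4$-cycle plus one diagonal).
   Context: For a graph $H$ and a graphon $W$ (a measurable symmetric function $W:[0,1]^2\to[0,1]$), let $t_H(W)=\int_{[0,1]^{V(H)}}\prod_{uv\in E(H)}W(x_u,x_v)\,dx$ and $m_H(W)=t_H(W)+t_H(1-W)$. *)

theory Defs
  imports "HOL-Analysis.Analysis"
begin

text \<open>A graphon: a measurable symmetric function on the unit square with values in [0,1].
  We represent it as a function real => real => real and only constrain it on [0,1]^2.\<close>
definition graphon :: "(real \<Rightarrow> real \<Rightarrow> real) \<Rightarrow> bool" where
  "graphon W \<longleftrightarrow>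
     (\<lambda>(x, y). W x y) \<in> borel_measurable (restrict_space lborel {0..1::real} \<Otimes>\<^sub>M restrict_space lborel {0..1::real}) \<and>
     (\<forall>x\<in>{0..1}. \<forall>y\<in>{0..1}. W x y = W y x) \<and>
     (\<forall>x\<in>{0..1}. \<forall>y\<in>{0..1}. 0 \<le> W x y \<and> W x y \<le> 1)"

definition unit_meas :: "real measure" where
  "unit_meas = restrict_space lborel {0..1}"

text \<open>A finite graph H with vertex set {0..<n} and edge set E (each edge listed once
  as a pair). Homomorphism density t_H(W).\<close>
definition hom_density :: "nat \<Rightarrow> (nat \<times> nat) set \<Rightarrow> (real \<Rightarrow> real \<Rightarrow> real) \<Rightarrow> real" where
  "hom_density n E W =
     integral\<^sup>L (PiM {..<n} (\<lambda>_. unit_meas)) (\<lambda>x. \<Prod>(u, v)\<in>E. W (x u) (x v))"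

definition m_density :: "nat \<Rightarrow> (nat \<times> nat) set \<Rightarrow> (real \<Rightarrow> real \<Rightarrow> real) \<Rightarrow> real" where
  "m_density n E W = hom_density n E W + hom_density n E (\<lambda>x y. 1 - W x y)"

definition C4_edges :: "(nat \<times> nat) set" where
  "C4_edges = {(0,1), (1,2), (2,3), (0,3)}"

definition diamond_edges :: "(nat \<times> nat) set" where
  "diamond_edges = {(0,1), (1,2), (2,3), (0,3), (0,2)}"

end

theory Submission
  imports Defs "HOL-Probability.Probability"
begin


lemma unit_prob: "prob_space unit_meas"
  unfolding unit_meas_def by (rule prob_space_restrict_space) auto

definition "mu4 = PiM {..<4::nat} (\<lambda>_. unit_meas)"

lemma mu4_prob: "prob_space mu4" unfolding mu4_def by (rule prob_space_PiM) (rule unit_prob)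

lemma space_unit: "space unit_meas = {0..1}"
  by (simp add: unit_meas_def space_restrict_space)

lemma space_mu4: "x \<in> space mu4 \<Longrightarrow> i < 4 \<Longrightarrow> x i \<in> {0..1}"
proof -
  assume x: "x \<in> space mu4" and i: "i < 4"
  have "x \<in> PiE {..<4} (\<lambda>_. {0..1::real})"
    using x by (simp add: mu4_def space_PiM space_unit)
  then show ?thesis using i PiE_mem by blast
qed

definition uu :: "(real \<Rightarrow> real \<Rightarrow> real) \<Rightarrow> real \<Rightarrow> real \<Rightarrow> real" where
  "uu W a b = 2 * W a b - 1"

definition Bint :: "((nat \<Rightarrow> real) \<Rightarrow> real) \<Rightarrow> bool" where
  "Bint f \<longleftrightarrow> f \<in> borel_measurable mu4 \<and> (\<exists>B. \<forall>x\<in>space mu4. \<bar>f x\<bar> \<le> B)"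

lemma Bint_integrable: "Bint f \<Longrightarrow> integrable mu4 f"
proof -
  assume "Bint f"
  then obtain B where m: "f \<in> borel_measurable mu4" and B: "\<forall>x\<in>space mu4. \<bar>f x\<bar> \<le> B"
    unfolding Bint_def by blast
  interpret prob_space mu4 by (rule mu4_prob)
  show ?thesis
    by (rule integrable_const_bound[where B=B]) (use m B in auto)
qed

lemma Bint_const[simp]: "Bint (\<lambda>x. c)"
  unfolding Bint_def by auto

lemma Bint_add[simp]: "Bint f \<Longrightarrow> Bint g \<Longrightarrow> Bint (\<lambda>x. f x + g x)"
  unfolding Bint_def
  apply (auto)
  subgoal for B1 B2 by (rule exI[of _ "B1 + B2"]) (metis abs_triangle_ineq add_mono order_trans)
  done

lemma Bint_diff[simp]: "Bint f \<Longrightarrow> Bint g \<Longrightarrow> Bint (\<lambda>x. f x - g x)"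
  unfolding Bint_def
  apply (auto)
  subgoal for B1 B2 by (rule exI[of _ "B1 + B2"]) (metis abs_triangle_ineq4 add_mono order_trans)
  done

lemma Bint_mult[simp]: "Bint f \<Longrightarrow> Bint g \<Longrightarrow> Bint (\<lambda>x. f x * g x)"
  unfolding Bint_def
  apply (auto)
  subgoal for B1 B2 
  proof (rule exI[of _ "B1 * B2"], intro ballI)
    fix x assume "\<forall>x\<in>space mu4. \<bar>f x\<bar> \<le> B1" "\<forall>x\<in>space mu4. \<bar>g x\<bar> \<le> B2" "x \<in> space mu4"
    then have a: "\<bar>f x\<bar> \<le> B1" and b: "\<bar>g x\<bar> \<le> B2" by auto
    have "\<bar>f x * g x\<bar> = \<bar>f x\<bar> * \<bar>g x\<bar>" by (rule abs_mult)
    also have "\<dots> \<le> B1 * B2"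
      by (rule mult_mono[OF a b]) (use a in \<open>linarith\<close>, simp)
    finally show "\<bar>f x * g x\<bar> \<le> B1 * B2" .
  qed
  done

context fixes W assumes gW: "graphon W" begin

lemma W_meas: "(\<lambda>(x,y). W x y) \<in> borel_measurable (unit_meas \<Otimes>\<^sub>M unit_meas)"
  using gW by (simp add: graphon_def unit_meas_def)

lemma W_bnd: "a \<in> {0..1} \<Longrightarrow> b \<in> {0..1} \<Longrightarrow> 0 \<le> W a b \<and> W a b \<le> 1"
  using gW by (simp add: graphon_def)

lemma W_sym: "a \<in> {0..1} \<Longrightarrow> b \<in> {0..1} \<Longrightarrow> W a b = W b a"
  using gW by (simp add: graphon_def)

lemma uu_sym: "a \<in> {0..1} \<Longrightarrow> b \<in> {0..1} \<Longrightarrow> uu W a b = uu W b a"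
  using W_sym by (simp add: uu_def)

lemma uu_bnd: "a \<in> {0..1} \<Longrightarrow> b \<in> {0..1} \<Longrightarrow> \<bar>uu W a b\<bar> \<le> 1"
  using W_bnd[of a b] by (simp add: uu_def abs_le_iff)

lemma Bint_W[simp]: "i < 4 \<Longrightarrow> j < 4 \<Longrightarrow> Bint (\<lambda>x. W (x i) (x j))"
proof -
  assume ij: "i < 4" "j < 4"
  have p: "(\<lambda>x. (x i, x j)) \<in> measurable mu4 (unit_meas \<Otimes>\<^sub>M unit_meas)"
    using ij by (auto intro!: measurable_Pair measurable_component_singleton simp: mu4_def)
  have "(\<lambda>x. (\<lambda>(a,b). W a b) (x i, x j)) \<in> borel_measurable mu4"
    by (rule measurable_compose[OF p W_meas])
  then have m: "(\<lambda>x. W (x i) (x j)) \<in> borel_measurable mu4" by simp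
  show ?thesis unfolding Bint_def
    using m W_bnd space_mu4 ij by (intro conjI exI[of _ 1]) (auto simp: abs_le_iff)
qed

lemma Bint_uu[simp]: "i < 4 \<Longrightarrow> j < 4 \<Longrightarrow> Bint (\<lambda>x. uu W (x i) (x j))"
  unfolding uu_def by simp

end


lemma perm4:
  fixes f :: "(nat \<Rightarrow> real) \<Rightarrow> real"
  assumes "distinct xs" "set xs = {..<4}" "f \<in> borel_measurable mu4"
  shows "integral\<^sup>L mu4 f = integral\<^sup>L mu4 (\<lambda>x. f (\<lambda>n\<in>{..<4}. x (xs ! n)))"
proof -
  have len: "length xs = 4" using assms(1,2) distinct_card by fastforce
  have bij: "bij_betw ((!) xs) {..<4} {..<4}"
    using bij_betw_nth[OF assms(1)] len assms(2) by simp
  have D: "distr mu4 mu4 (\<lambda>\<omega>. \<lambda>n\<in>{..<4}. \<omega> (xs ! n)) = mu4"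
    unfolding mu4_def
    using distr_PiM_reindex[of "{..<4::nat}" "\<lambda>_. unit_meas" "(!) xs" "{..<4}"] unit_prob bij
    by (auto simp: bij_betw_def)
  have t: "(\<lambda>\<omega>. \<lambda>n\<in>{..<4}. \<omega> (xs ! n)) \<in> measurable mu4 mu4"
    unfolding mu4_def
    using bij by (auto intro!: measurable_restrict measurable_component_singleton simp: bij_betw_def)
  have "integral\<^sup>L mu4 f = integral\<^sup>L (distr mu4 mu4 (\<lambda>\<omega>. \<lambda>n\<in>{..<4}. \<omega> (xs ! n))) f"
    using D by simp
  also have "\<dots> = integral\<^sup>L mu4 (\<lambda>x. f (\<lambda>n\<in>{..<4}. x (xs ! n)))"
    by (rule integral_distr[OF t assms(3)])
  finally show ?thesis .
qed

interpretation PS: product_sigma_finite "\<lambda>_::nat. unit_meas"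
  unfolding product_sigma_finite_def
  using unit_prob by (auto simp: prob_space_imp_sigma_finite)

lemma sq_lemma:
  fixes h :: "real \<Rightarrow> real \<Rightarrow> real" and G :: "real \<Rightarrow> real \<Rightarrow> real \<Rightarrow> real"
  assumes int: "integrable mu4 (\<lambda>x. h (x 0) (x 1) * G (x 0) (x 1) (x 2) * G (x 0) (x 1) (x 3))"
    and hpos: "\<And>a b. a \<in> {0..1} \<Longrightarrow> b \<in> {0..1} \<Longrightarrow> 0 \<le> h a b"
    and gint: "\<And>a b. a \<in> {0..1} \<Longrightarrow> b \<in> {0..1} \<Longrightarrow> integrable unit_meas (G a b)"
  shows "0 \<le> integral\<^sup>L mu4 (\<lambda>x. h (x 0) (x 1) * G (x 0) (x 1) (x 2) * G (x 0) (x 1) (x 3))"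
proof -
  let ?F = "\<lambda>x::nat\<Rightarrow>real. h (x 0) (x 1) * G (x 0) (x 1) (x 2) * G (x 0) (x 1) (x 3)"
  have U: "{..<4::nat} = {0,1} \<union> {2,3}" by auto
  have "integral\<^sup>L mu4 ?F = (\<integral>x. (\<integral>y. ?F (merge {0::nat,1} {2::nat,3} (x, y)) \<partial>PiM {2::nat,3} (\<lambda>_. unit_meas)) \<partial>PiM {0::nat,1} (\<lambda>_. unit_meas))"
    unfolding mu4_def U
    by (rule PS.product_integral_fold) (use int in \<open>auto simp: mu4_def U\<close>)
  also have "\<dots> \<ge> 0"
  proof (rule Bochner_Integration.integral_nonneg)
    fix x assume x: "x \<in> space (PiM {0::nat,1} (\<lambda>_. unit_meas))"
    then have "x \<in> PiE {0::nat,1} (\<lambda>_. {0..1::real})" by (simp add: space_PiM space_unit)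
    then have x0: "x 0 \<in> {0..1}" and x1: "x 1 \<in> {0..1}" using PiE_mem by blast+
    have "(\<integral>y. ?F (merge {0::nat,1} {2::nat,3} (x, y)) \<partial>PiM {2::nat,3} (\<lambda>_. unit_meas))
       = (\<integral>y. h (x 0) (x 1) * (\<Prod>i\<in>{2,3}. G (x 0) (x 1) (y i)) \<partial>PiM {2::nat,3} (\<lambda>_. unit_meas))"
      by (rule Bochner_Integration.integral_cong) (simp_all add: merge_def)
    also have "\<dots> = h (x 0) (x 1) * (\<integral>y. (\<Prod>i\<in>{2,3}. G (x 0) (x 1) (y i)) \<partial>PiM {2::nat,3} (\<lambda>_. unit_meas))"
      by (rule integral_mult_right_zero)
    also have "(\<integral>y. (\<Prod>i\<in>{2,3}. G (x 0) (x 1) (y i)) \<partial>PiM {2::nat,3} (\<lambda>_. unit_meas))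
       = (\<Prod>i\<in>{2::nat,3}. integral\<^sup>L unit_meas (G (x 0) (x 1)))"
      by (rule PS.product_integral_prod) (use gint[OF x0 x1] in auto)
    also have "\<dots> = (integral\<^sup>L unit_meas (G (x 0) (x 1)))^2"
      by (simp add: power2_eq_square)
    finally show "0 \<le> (\<integral>y. ?F (merge {0::nat,1} {2::nat,3} (x, y)) \<partial>PiM {2::nat,3} (\<lambda>_. unit_meas))"
      using hpos[OF x0 x1] by simp
  qed
  finally show ?thesis .
qed

context fixes W assumes gW: "graphon W" begin

lemma uu_meas2: "(\<lambda>(a,b). uu W a b) \<in> borel_measurable (unit_meas \<Otimes>\<^sub>M unit_meas)"
proof -
  have "(\<lambda>p. 2 * (\<lambda>(x,y). W x y) p - 1) \<in> borel_measurable (unit_meas \<Otimes>\<^sub>M unit_meas)"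
    using W_meas[OF gW] by measurable
  then show ?thesis by (simp add: uu_def case_prod_beta)
qed

lemma uu_sec: "a \<in> {0..1} \<Longrightarrow> integrable unit_meas (uu W a)"
proof -
  assume a: "a \<in> {0..1}"
  interpret prob_space unit_meas by (rule unit_prob)
  have m: "uu W a \<in> borel_measurable unit_meas"
    using measurable_Pair2[OF uu_meas2, of a] a by (simp add: space_unit)
  show ?thesis
    by (rule integrable_const_bound[where B=1]) (use m uu_bnd[OF gW a] in \<open>auto simp: space_unit\<close>)
qed

lemma E_nonneg: "0 \<le> integral\<^sup>L mu4 (\<lambda>x. uu W (x 0) (x 1) * uu W (x 2) (x 3))"
proof -
  let ?F = "\<lambda>x::nat\<Rightarrow>real. uu W (x 0) (x 1) * uu W (x 2) (x 3)"
  define d where "d a = integral\<^sup>L unit_meas (uu W a)" for a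
  interpret prob_space unit_meas by (rule unit_prob)
  have dm: "d \<in> borel_measurable unit_meas"
    unfolding d_def using uu_meas2 by measurable
  have dint: "integrable unit_meas d"
  proof (rule integrable_const_bound[where B=1])
    show "AE x in unit_meas. norm (d x) \<le> 1"
    proof (rule AE_I2)
      fix a assume "a \<in> space unit_meas"
      then have a: "a \<in> {0..1}" by (simp add: space_unit)
      have "norm (d a) \<le> (\<integral>y. norm (uu W a y) \<partial>unit_meas)"
        unfolding d_def by (rule integral_norm_bound)
      also have "\<dots> \<le> (\<integral>y. 1 \<partial>unit_meas)"
        by (rule integral_mono') (use uu_bnd[OF gW a] in \<open>auto simp: space_unit\<close>)
      also have "\<dots> = 1" using prob_space by simp
      finally show "norm (d a) \<le> 1" .
    qed
  qed (rule dm)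
  have U: "{..<4::nat} = {0,2} \<union> {1,3}" by auto
  have "integral\<^sup>L mu4 ?F = (\<integral>x. (\<integral>y. ?F (merge {0::nat,2} {1::nat,3} (x, y)) \<partial>PiM {1::nat,3} (\<lambda>_. unit_meas)) \<partial>PiM {0::nat,2} (\<lambda>_. unit_meas))"
    unfolding mu4_def U
    by (rule PS.product_integral_fold) (use Bint_integrable[OF Bint_mult[OF Bint_uu[OF gW] Bint_uu[OF gW]]] in \<open>auto simp: mu4_def U\<close>)
  also have "\<dots> = (\<integral>x. d (x 0) * d (x 2) \<partial>PiM {0::nat,2} (\<lambda>_. unit_meas))"
  proof (rule Bochner_Integration.integral_cong[OF refl])
    fix x assume x: "x \<in> space (PiM {0::nat,2} (\<lambda>_. unit_meas))"
    then have "x \<in> PiE {0::nat,2} (\<lambda>_. {0..1::real})" by (simp add: space_PiM space_unit)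
    then have x0: "x 0 \<in> {0..1}" and x2: "x 2 \<in> {0..1}" using PiE_mem by blast+
    have "(\<integral>y. ?F (merge {0::nat,2} {1::nat,3} (x, y)) \<partial>PiM {1::nat,3} (\<lambda>_. unit_meas))
       = (\<integral>y. (\<Prod>i\<in>{1,3}. (\<lambda>i. if i = 1 then uu W (x 0) else uu W (x 2)) i (y i)) \<partial>PiM {1::nat,3} (\<lambda>_. unit_meas))"
      by (rule Bochner_Integration.integral_cong) (simp_all add: merge_def)
    also have "\<dots> = (\<Prod>i\<in>{1::nat,3}. integral\<^sup>L unit_meas ((\<lambda>i. if i = 1 then uu W (x 0) else uu W (x 2)) i))"
      by (rule PS.product_integral_prod) (use uu_sec[OF x0] uu_sec[OF x2] in auto)
    also have "\<dots> = d (x 0) * d (x 2)" by (simp add: d_def)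
    finally show "(\<integral>y. ?F (merge {0::nat,2} {1::nat,3} (x, y)) \<partial>PiM {1::nat,3} (\<lambda>_. unit_meas)) = d (x 0) * d (x 2)" .
  qed
  also have "\<dots> = (\<integral>x. (\<Prod>i\<in>{0,2}. d (x i)) \<partial>PiM {0::nat,2} (\<lambda>_. unit_meas))"
    by simp
  also have "\<dots> = (\<Prod>i\<in>{0::nat,2}. integral\<^sup>L unit_meas d)"
    by (rule PS.product_integral_prod) (simp_all add: dint)
  also have "\<dots> = (integral\<^sup>L unit_meas d)^2" by (simp add: power2_eq_square)
  finally show ?thesis by simp
qed

end


lemma poly4: "(a::real)*(b*(c*d)) + (1-a)*((1-b)*((1-c)*(1-d))) =
  (1 + (2*a-1)*(2*b-1) + (2*a-1)*(2*c-1) + (2*a-1)*(2*d-1)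
     + (2*b-1)*(2*c-1) + (2*b-1)*(2*d-1) + (2*c-1)*(2*d-1)
     + (2*a-1)*(2*b-1)*(2*c-1)*(2*d-1)) / 8"
  by algebra
lemma poly5: "(a::real)*(b*(c*(d*e))) + (1-a)*((1-b)*((1-c)*((1-d)*(1-e)))) =
  (1 + (2*a-1)*(2*b-1) + (2*a-1)*(2*c-1) + (2*a-1)*(2*d-1) + (2*a-1)*(2*e-1)
     + (2*b-1)*(2*c-1) + (2*b-1)*(2*d-1) + (2*b-1)*(2*e-1)
     + (2*c-1)*(2*d-1) + (2*c-1)*(2*e-1) + (2*d-1)*(2*e-1)
     + (2*b-1)*(2*c-1)*(2*d-1)*(2*e-1) + (2*a-1)*(2*c-1)*(2*d-1)*(2*e-1)
     + (2*a-1)*(2*b-1)*(2*d-1)*(2*e-1) + (2*a-1)*(2*b-1)*(2*c-1)*(2*e-1)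
     + (2*a-1)*(2*b-1)*(2*c-1)*(2*d-1)) / 16"
  by algebra

lemma meas1: "measure mu4 (space mu4) = 1"
  by (rule prob_space.prob_space[OF mu4_prob])

lemma int1: "integral\<^sup>L mu4 (\<lambda>x. 1::real) = 1"
  by (simp add: meas1)

lemma lt4: "{..<4::nat} = {0,1,2,3}" by auto

lemma perm_eq:
  fixes f g :: "(nat \<Rightarrow> real) \<Rightarrow> real"
  assumes "distinct xs" "set xs = {..<4}" "Bint f"
    "\<And>x. x \<in> space mu4 \<Longrightarrow> f (\<lambda>n\<in>{..<4}. x (xs ! n)) = g x"
  shows "integral\<^sup>L mu4 f = integral\<^sup>L mu4 g"
proof -
  have "integral\<^sup>L mu4 f = integral\<^sup>L mu4 (\<lambda>x. f (\<lambda>n\<in>{..<4}. x (xs ! n)))"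
    using perm4[OF assms(1,2)] assms(3) by (simp add: Bint_def)
  also have "\<dots> = integral\<^sup>L mu4 g"
    by (rule Bochner_Integration.integral_cong) (simp_all add: assms(4))
  finally show ?thesis .
qed

context fixes W assumes gW: "graphon W" begin

lemma uu_symx: "x \<in> space mu4 \<Longrightarrow> i < 4 \<Longrightarrow> j < 4 \<Longrightarrow> uu W (x i) (x j) = uu W (x j) (x i)"
  by (rule uu_sym[OF gW]) (use space_mu4 in blast)+

lemma Bint_uu'[simp]: "i < 4 \<Longrightarrow> j < 4 \<Longrightarrow> Bint (\<lambda>x. uu W (x i) (x j))"
  by (rule Bint_uu[OF gW])

lemma id1: "integral\<^sup>L mu4 (\<lambda>x. uu W (x 0) (x 1) * uu W (x 1) (x 2)) = integral\<^sup>L mu4 (\<lambda>x. uu W (x 0) (x 1) * uu W (x 0) (x 2))"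
  by (rule perm_eq[where xs="[1, 0, 2, 3]"]) (simp, simp add: lt4 insert_commute, simp, simp add: uu_symx ac_simps)

lemma id2: "integral\<^sup>L mu4 (\<lambda>x. uu W (x 0) (x 1) * uu W (x 0) (x 3)) = integral\<^sup>L mu4 (\<lambda>x. uu W (x 0) (x 1) * uu W (x 0) (x 2))"
  by (rule perm_eq[where xs="[0, 1, 3, 2]"]) (simp, simp add: lt4 insert_commute, simp, simp add: uu_symx ac_simps)

lemma id3: "integral\<^sup>L mu4 (\<lambda>x. uu W (x 1) (x 2) * uu W (x 2) (x 3)) = integral\<^sup>L mu4 (\<lambda>x. uu W (x 0) (x 1) * uu W (x 0) (x 2))"
  by (rule perm_eq[where xs="[3, 1, 0, 2]"]) (simp, simp add: lt4 insert_commute, simp, simp add: uu_symx ac_simps)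

lemma id4: "integral\<^sup>L mu4 (\<lambda>x. uu W (x 1) (x 2) * uu W (x 0) (x 3)) = integral\<^sup>L mu4 (\<lambda>x. uu W (x 0) (x 1) * uu W (x 2) (x 3))"
  by (rule perm_eq[where xs="[0, 2, 3, 1]"]) (simp, simp add: lt4 insert_commute, simp, simp add: uu_symx ac_simps)

lemma id5: "integral\<^sup>L mu4 (\<lambda>x. uu W (x 1) (x 2) * uu W (x 0) (x 2)) = integral\<^sup>L mu4 (\<lambda>x. uu W (x 0) (x 1) * uu W (x 0) (x 2))"
  by (rule perm_eq[where xs="[1, 2, 0, 3]"]) (simp, simp add: lt4 insert_commute, simp, simp add: uu_symx ac_simps)

lemma id6: "integral\<^sup>L mu4 (\<lambda>x. uu W (x 2) (x 3) * uu W (x 0) (x 3)) = integral\<^sup>L mu4 (\<lambda>x. uu W (x 0) (x 1) * uu W (x 0) (x 2))"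
  by (rule perm_eq[where xs="[1, 3, 2, 0]"]) (simp, simp add: lt4 insert_commute, simp, simp add: uu_symx ac_simps)

lemma id7: "integral\<^sup>L mu4 (\<lambda>x. uu W (x 2) (x 3) * uu W (x 0) (x 2)) = integral\<^sup>L mu4 (\<lambda>x. uu W (x 0) (x 1) * uu W (x 0) (x 2))"
  by (rule perm_eq[where xs="[1, 3, 0, 2]"]) (simp, simp add: lt4 insert_commute, simp, simp add: uu_symx ac_simps)

lemma id8: "integral\<^sup>L mu4 (\<lambda>x. uu W (x 0) (x 3) * uu W (x 0) (x 2)) = integral\<^sup>L mu4 (\<lambda>x. uu W (x 0) (x 1) * uu W (x 0) (x 2))"
  by (rule perm_eq[where xs="[0, 3, 1, 2]"]) (simp, simp add: lt4 insert_commute, simp, simp add: uu_symx ac_simps)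

lemma id9: "integral\<^sup>L mu4 (\<lambda>x. ((uu W (x 1) (x 2) * uu W (x 2) (x 3)) * uu W (x 0) (x 3)) * uu W (x 0) (x 2)) = integral\<^sup>L mu4 (\<lambda>x. (uu W (x 1) (x 2) * uu W (x 0) (x 2)) * (uu W (x 1) (x 0) * uu W (x 0) (x 3)))"
  by (rule perm_eq[where xs="[1, 3, 0, 2]"]) (simp, simp add: lt4 insert_commute, simp, simp add: uu_symx ac_simps)

lemma id10: "integral\<^sup>L mu4 (\<lambda>x. ((uu W (x 0) (x 1) * uu W (x 2) (x 3)) * uu W (x 0) (x 3)) * uu W (x 0) (x 2)) = integral\<^sup>L mu4 (\<lambda>x. (uu W (x 1) (x 2) * uu W (x 0) (x 2)) * (uu W (x 1) (x 0) * uu W (x 0) (x 3)))"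
  by (rule perm_eq[where xs="[0, 3, 1, 2]"]) (simp, simp add: lt4 insert_commute, simp, simp add: uu_symx ac_simps)

lemma id11: "integral\<^sup>L mu4 (\<lambda>x. ((uu W (x 0) (x 1) * uu W (x 1) (x 2)) * uu W (x 0) (x 3)) * uu W (x 0) (x 2)) = integral\<^sup>L mu4 (\<lambda>x. (uu W (x 1) (x 2) * uu W (x 0) (x 2)) * (uu W (x 1) (x 0) * uu W (x 0) (x 3)))"
  by (rule perm_eq[where xs="[0, 1, 2, 3]"]) (simp, simp add: lt4 insert_commute, simp, simp add: uu_symx ac_simps)

lemma id12: "integral\<^sup>L mu4 (\<lambda>x. ((uu W (x 0) (x 1) * uu W (x 1) (x 2)) * uu W (x 2) (x 3)) * uu W (x 0) (x 2)) = integral\<^sup>L mu4 (\<lambda>x. (uu W (x 1) (x 2) * uu W (x 0) (x 2)) * (uu W (x 1) (x 0) * uu W (x 0) (x 3)))"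
  by (rule perm_eq[where xs="[1, 2, 0, 3]"]) (simp, simp add: lt4 insert_commute, simp, simp add: uu_symx ac_simps)

lemma id13: "integral\<^sup>L mu4 (\<lambda>x. uu W (x 0) (x 2) * uu W (x 0) (x 3)) = integral\<^sup>L mu4 (\<lambda>x. uu W (x 0) (x 1) * uu W (x 0) (x 2))"
  by (rule perm_eq[where xs="[0, 3, 1, 2]"]) (simp, simp add: lt4 insert_commute, simp, simp add: uu_symx ac_simps)

lemma id14: "integral\<^sup>L mu4 (\<lambda>x. (uu W (x 1) (x 2) * uu W (x 0) (x 2)) * (uu W (x 1) (x 3) * uu W (x 0) (x 3))) = integral\<^sup>L mu4 (\<lambda>x. ((uu W (x 0) (x 1) * uu W (x 1) (x 2)) * uu W (x 2) (x 3)) * uu W (x 0) (x 3))"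
  by (rule perm_eq[where xs="[0, 2, 1, 3]"]) (simp, simp add: lt4 insert_commute, simp, simp add: uu_symx ac_simps)

lemma id15: "integral\<^sup>L mu4 (\<lambda>x. (uu W (x 1) (x 0) * uu W (x 0) (x 2)) * (uu W (x 1) (x 3) * uu W (x 0) (x 3))) = integral\<^sup>L mu4 (\<lambda>x. (uu W (x 1) (x 2) * uu W (x 0) (x 2)) * (uu W (x 1) (x 0) * uu W (x 0) (x 3)))"
  by (rule perm_eq[where xs="[0, 1, 3, 2]"]) (simp, simp add: lt4 insert_commute, simp, simp add: uu_symx ac_simps)

lemma uu_prod_int: "a \<in> {0..1} \<Longrightarrow> b \<in> {0..1} \<Longrightarrow> integrable unit_meas (\<lambda>y. uu W b y * uu W a y)"
proof -
  assume a: "a \<in> {0..1}" and b: "b \<in> {0..1}"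
  interpret prob_space unit_meas by (rule unit_prob)
  have ma: "uu W a \<in> borel_measurable unit_meas" using uu_sec[OF gW a] by auto
  have mb: "uu W b \<in> borel_measurable unit_meas" using uu_sec[OF gW b] by auto
  show ?thesis
  proof (rule integrable_const_bound[where B=1])
    show "AE y in unit_meas. norm (uu W b y * uu W a y) \<le> 1"
    proof (rule AE_I2)
      fix y assume "y \<in> space unit_meas"
      then have y: "y \<in> {0..1}" by (simp add: space_unit)
      have "\<bar>uu W b y\<bar> * \<bar>uu W a y\<bar> \<le> 1"
        by (rule mult_le_one) (use uu_bnd[OF gW b y] uu_bnd[OF gW a y] in auto)
      then show "norm (uu W b y * uu W a y) \<le> 1" by (simp add: abs_mult)
    qed
  qed (use ma mb in simp)
qed

lemma F1: "0 \<le> \<alpha>^2 * integral\<^sup>L mu4 (\<lambda>x. (uu W (x 1) (x 2) * uu W (x 0) (x 2)) * (uu W (x 1) (x 3) * uu W (x 0) (x 3))) + \<alpha>*\<beta> * integral\<^sup>L mu4 (\<lambda>x. (uu W (x 1) (x 2) * uu W (x 0) (x 2)) * (uu W (x 1) (x 0) * uu W (x 0) (x 3))) + \<alpha>*\<beta> * integral\<^sup>L mu4 (\<lambda>x. (uu W (x 1) (x 0) * uu W (x 0) (x 2)) * (uu W (x 1) (x 3) * uu W (x 0) (x 3))) + \<beta>^2 * integral\<^sup>L mu4 (\<lambda>x. (uu W (x 1) (x 0) * uu W (x 0) (x 2)) * (uu W (x 1) (x 0) * uu W (x 0) (x 3)))"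
proof -
  define GG where "GG = (\<lambda>a b y. \<alpha>*(uu W b y * uu W a y) + \<beta>*(uu W b a * uu W a y))"
  have s: "0 \<le> integral\<^sup>L mu4 (\<lambda>x. 1 * GG (x 0) (x 1) (x 2) * GG (x 0) (x 1) (x 3))"
  proof (rule sq_lemma[where h="\<lambda>a b. 1" and G=GG])
    show "integrable mu4 (\<lambda>x. 1 * GG (x 0) (x 1) (x 2) * GG (x 0) (x 1) (x 3))"
      by (rule Bint_integrable) (simp add: GG_def)
    fix a b :: real assume a: "a \<in> {0..1}" and b: "b \<in> {0..1}"
    show "0 \<le> (1::real)" by simp
    show "integrable unit_meas (GG a b)"
      unfolding GG_def
      by (intro Bochner_Integration.integrable_add Bochner_Integration.integrable_mult_right uu_prod_int uu_sec[OF gW] a b)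
  qed
  have "integral\<^sup>L mu4 (\<lambda>x. 1 * GG (x 0) (x 1) (x 2) * GG (x 0) (x 1) (x 3))
     = integral\<^sup>L mu4 (\<lambda>x. \<alpha>^2 * ((uu W (x 1) (x 2) * uu W (x 0) (x 2)) * (uu W (x 1) (x 3) * uu W (x 0) (x 3))) + \<alpha>*\<beta> * ((uu W (x 1) (x 2) * uu W (x 0) (x 2)) * (uu W (x 1) (x 0) * uu W (x 0) (x 3))) + \<alpha>*\<beta> * ((uu W (x 1) (x 0) * uu W (x 0) (x 2)) * (uu W (x 1) (x 3) * uu W (x 0) (x 3))) + \<beta>^2 * ((uu W (x 1) (x 0) * uu W (x 0) (x 2)) * (uu W (x 1) (x 0) * uu W (x 0) (x 3))))"
    unfolding GG_def by (rule Bochner_Integration.integral_cong[OF refl]) (simp add: algebra_simps power2_eq_square)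
  also have "\<dots> = \<alpha>^2 * integral\<^sup>L mu4 (\<lambda>x. (uu W (x 1) (x 2) * uu W (x 0) (x 2)) * (uu W (x 1) (x 3) * uu W (x 0) (x 3))) + \<alpha>*\<beta> * integral\<^sup>L mu4 (\<lambda>x. (uu W (x 1) (x 2) * uu W (x 0) (x 2)) * (uu W (x 1) (x 0) * uu W (x 0) (x 3))) + \<alpha>*\<beta> * integral\<^sup>L mu4 (\<lambda>x. (uu W (x 1) (x 0) * uu W (x 0) (x 2)) * (uu W (x 1) (x 3) * uu W (x 0) (x 3))) + \<beta>^2 * integral\<^sup>L mu4 (\<lambda>x. (uu W (x 1) (x 0) * uu W (x 0) (x 2)) * (uu W (x 1) (x 0) * uu W (x 0) (x 3)))"
    by (simp add: Bint_integrable)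
  finally show ?thesis using s by simp
qed

lemma Bint_sq[simp]: "Bint f \<Longrightarrow> Bint (\<lambda>x. (f x)^2)"
  unfolding power2_eq_square by simp

lemma F2: "integral\<^sup>L mu4 (\<lambda>x. (uu W (x 1) (x 0) * uu W (x 0) (x 2)) * (uu W (x 1) (x 0) * uu W (x 0) (x 3))) \<le> integral\<^sup>L mu4 (\<lambda>x. uu W (x 0) (x 2) * uu W (x 0) (x 3))"
proof -
  have s: "0 \<le> integral\<^sup>L mu4 (\<lambda>x. (1 - (uu W (x 0) (x 1))^2) * uu W (x 0) (x 2) * uu W (x 0) (x 3))"
  proof (rule sq_lemma[where h="\<lambda>a b. 1 - (uu W a b)^2" and G="\<lambda>a b y. uu W a y"])
    show "integrable mu4 (\<lambda>x. (1 - (uu W (x 0) (x 1))^2) * uu W (x 0) (x 2) * uu W (x 0) (x 3))"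
      by (rule Bint_integrable) simp
    fix a b :: real assume a: "a \<in> {0..1}" and b: "b \<in> {0..1}"
    show "0 \<le> 1 - (uu W a b)^2" using uu_bnd[OF gW a b] abs_square_le_1[of "uu W a b"] by simp
    show "integrable unit_meas (uu W a)" by (rule uu_sec[OF gW a])
  qed
  have "integral\<^sup>L mu4 (\<lambda>x. (1 - (uu W (x 0) (x 1))^2) * uu W (x 0) (x 2) * uu W (x 0) (x 3))
      = integral\<^sup>L mu4 (\<lambda>x. uu W (x 0) (x 2) * uu W (x 0) (x 3) - ((uu W (x 1) (x 0) * uu W (x 0) (x 2)) * (uu W (x 1) (x 0) * uu W (x 0) (x 3))))"
  proof (rule Bochner_Integration.integral_cong[OF refl])
    fix x assume x: "x \<in> space mu4"
    have "uu W (x 1) (x 0) = uu W (x 0) (x 1)" by (rule uu_symx[OF x]) simp_all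
    then show "(1 - (uu W (x 0) (x 1))^2) * uu W (x 0) (x 2) * uu W (x 0) (x 3) = uu W (x 0) (x 2) * uu W (x 0) (x 3) - ((uu W (x 1) (x 0) * uu W (x 0) (x 2)) * (uu W (x 1) (x 0) * uu W (x 0) (x 3)))"
      by (simp add: algebra_simps power2_eq_square)
  qed
  also have "\<dots> = integral\<^sup>L mu4 (\<lambda>x. uu W (x 0) (x 2) * uu W (x 0) (x 3)) - integral\<^sup>L mu4 (\<lambda>x. (uu W (x 1) (x 0) * uu W (x 0) (x 2)) * (uu W (x 1) (x 0) * uu W (x 0) (x 3)))"
    by (rule Bochner_Integration.integral_diff) (simp_all add: Bint_integrable)
  finally show ?thesis using s by simp
qed

lemma F3: "0 \<le> integral\<^sup>L mu4 (\<lambda>x. uu W (x 0) (x 2) * uu W (x 0) (x 3))"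
proof -
  have s: "0 \<le> integral\<^sup>L mu4 (\<lambda>x. 1 * uu W (x 0) (x 2) * uu W (x 0) (x 3))"
  proof (rule sq_lemma[where h="\<lambda>a b. 1" and G="\<lambda>a b y. uu W a y"])
    show "integrable mu4 (\<lambda>x. 1 * uu W (x 0) (x 2) * uu W (x 0) (x 3))"
      by (rule Bint_integrable) simp
    fix a b :: real assume a: "a \<in> {0..1}" and b: "b \<in> {0..1}"
    show "0 \<le> (1::real)" by simp
    show "integrable unit_meas (uu W a)" by (rule uu_sec[OF gW a])
  qed
  then show ?thesis by simp
qed

lemma mD: "m_density 4 diamond_edges W = (1 + (integral\<^sup>L mu4 (\<lambda>x. uu W (x 0) (x 1) * uu W (x 1) (x 2)) + integral\<^sup>L mu4 (\<lambda>x. uu W (x 0) (x 1) * uu W (x 2) (x 3)) + integral\<^sup>L mu4 (\<lambda>x. uu W (x 0) (x 1) * uu W (x 0) (x 3)) + integral\<^sup>L mu4 (\<lambda>x. uu W (x 0) (x 1) * uu W (x 0) (x 2)) + integral\<^sup>L mu4 (\<lambda>x. uu W (x 1) (x 2) * uu W (x 2) (x 3)) + integral\<^sup>L mu4 (\<lambda>x. uu W (x 1) (x 2) * uu W (x 0) (x 3)) + integral\<^sup>L mu4 (\<lambda>x. uu W (x 1) (x 2) * uu W (x 0) (x 2)) + integral\<^sup>L mu4 (\<lambda>x. uu W (x 2) (x 3) * uu W (x 0) (x 3)) + integral\<^sup>L mu4 (\<lambda>x. uu W (x 2) (x 3) * uu W (x 0) (x 2)) + integral\<^sup>L mu4 (\<lambda>x.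 uu W (x 0) (x 3) * uu W (x 0) (x 2)) + integral\<^sup>L mu4 (\<lambda>x. ((uu W (x 1) (x 2) * uu W (x 2) (x 3)) * uu W (x 0) (x 3)) * uu W (x 0) (x 2)) + integral\<^sup>L mu4 (\<lambda>x. ((uu W (x 0) (x 1) * uu W (x 2) (x 3)) * uu W (x 0) (x 3)) * uu W (x 0) (x 2)) + integral\<^sup>L mu4 (\<lambda>x. ((uu W (x 0) (x 1) * uu W (x 1) (x 2)) * uu W (x 0) (x 3)) * uu W (x 0) (x 2)) + integral\<^sup>L mu4 (\<lambda>x. ((uu W (x 0) (x 1) * uu W (x 1) (x 2)) * uu W (x 2) (x 3)) * uu W (x 0) (x 2)) + integral\<^sup>L mu4 (\<lambda>x. ((uu W (x 0) (x 1) * uu W (x 1) (x 2)) * uu W (x 2) (x 3)) * uu W (x 0) (x 3)))) / 16"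
proof -
  have "m_density 4 diamond_edges W = integral\<^sup>L mu4 (\<lambda>x. W (x 0) (x 1) * (W (x 1) (x 2) * (W (x 2) (x 3) * (W (x 0) (x 3) * W (x 0) (x 2))))) + integral\<^sup>L mu4 (\<lambda>x. (1 - W (x 0) (x 1)) * ((1 - W (x 1) (x 2)) * ((1 - W (x 2) (x 3)) * ((1 - W (x 0) (x 3)) * (1 - W (x 0) (x 2))))))"
    by (simp add: m_density_def hom_density_def mu4_def diamond_edges_def)
  also have "\<dots> = integral\<^sup>L mu4 (\<lambda>x. W (x 0) (x 1) * (W (x 1) (x 2) * (W (x 2) (x 3) * (W (x 0) (x 3) * W (x 0) (x 2)))) + (1 - W (x 0) (x 1)) * ((1 - W (x 1) (x 2)) * ((1 - W (x 2) (x 3)) * ((1 - W (x 0) (x 3)) * (1 - W (x 0) (x 2))))))"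
    by (rule Bochner_Integration.integral_add[symmetric]) (simp_all add: Bint_integrable Bint_W[OF gW])
  also have "\<dots> = integral\<^sup>L mu4 (\<lambda>x. (1 + uu W (x 0) (x 1) * uu W (x 1) (x 2) + uu W (x 0) (x 1) * uu W (x 2) (x 3) + uu W (x 0) (x 1) * uu W (x 0) (x 3) + uu W (x 0) (x 1) * uu W (x 0) (x 2) + uu W (x 1) (x 2) * uu W (x 2) (x 3) + uu W (x 1) (x 2) * uu W (x 0) (x 3) + uu W (x 1) (x 2) * uu W (x 0) (x 2) + uu W (x 2) (x 3) * uu W (x 0) (x 3) + uu W (x 2) (x 3) * uu W (x 0) (x 2) + uu W (x 0) (x 3) * uu W (x 0) (x 2) + ((uu W (x 1) (x 2) * uu W (x 2) (x 3)) * uu W (x 0) (x 3)) * uu W (x 0) (x 2) + ((uu W (x 0) (x 1) * uu W (x 2) (x 3)) * uu W (x 0) (x 3)) * uu W (x 0) (x 2) + ((uu W (x 0) (x 1) * uu W (x 1) (x 2)) * uu W (x 0) (x 3)) * uu W (x 0) (x 2) + ((uu W (x 0) (x 1) * uu W (x 1) (x 2)) * uu W (x 2) (x 3)) * uu W (x 0) (x 2) + ((uu W (x 0) (x 1) * uu W (x 1) (x 2)) * uu W (x 2) (x 3)) * uu W (x 0) (x 3)) / 16)"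
    by (rule Bochner_Integration.integral_cong[OF refl], unfold uu_def, rule poly5)
  also have "\<dots> = (1 + (integral\<^sup>L mu4 (\<lambda>x. uu W (x 0) (x 1) * uu W (x 1) (x 2)) + integral\<^sup>L mu4 (\<lambda>x. uu W (x 0) (x 1) * uu W (x 2) (x 3)) + integral\<^sup>L mu4 (\<lambda>x. uu W (x 0) (x 1) * uu W (x 0) (x 3)) + integral\<^sup>L mu4 (\<lambda>x. uu W (x 0) (x 1) * uu W (x 0) (x 2)) + integral\<^sup>L mu4 (\<lambda>x. uu W (x 1) (x 2) * uu W (x 2) (x 3)) + integral\<^sup>L mu4 (\<lambda>x. uu W (x 1) (x 2) * uu W (x 0) (x 3)) + integral\<^sup>L mu4 (\<lambda>x. uu W (x 1) (x 2) * uu W (x 0) (x 2)) + integral\<^sup>L mu4 (\<lambda>x. uu W (x 2) (x 3) * uu W (x 0) (x 3)) + integral\<^sup>L mu4 (\<lambda>x. uu W (x 2) (x 3) * uu W (x 0) (x 2)) + integral\<^sup>L mu4 (\<lambda>x. uu W (x 0) (x 3) * uu W (x 0) (x 2)) + integral\<^sup>L mu4 (\<lambda>x. ((uu W (x 1) (x 2) * uu W (x 2) (x 3)) * uu W (x 0) (x 3)) * uu W (x 0) (x 2)) + integral\<^sup>L mu4 (\<lambda>x. ((uu W (x 0) (x 1) * uu W (x 2) (x 3)) * uu W (x 0) (x 3)) * uu W (x 0) (x 2)) + integral\<^sup>L mu4 (\<lambda>x. ((uu W (x 0) (x 1) * uu W (x 1) (x 2)) * uu W (x 0) (x 3)) *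 uu W (x 0) (x 2)) + integral\<^sup>L mu4 (\<lambda>x. ((uu W (x 0) (x 1) * uu W (x 1) (x 2)) * uu W (x 2) (x 3)) * uu W (x 0) (x 2)) + integral\<^sup>L mu4 (\<lambda>x. ((uu W (x 0) (x 1) * uu W (x 1) (x 2)) * uu W (x 2) (x 3)) * uu W (x 0) (x 3)))) / 16"
    by (simp add: Bint_integrable meas1)
  finally show ?thesis .
qed

lemma mC: "m_density 4 C4_edges W = (1 + (integral\<^sup>L mu4 (\<lambda>x. uu W (x 0) (x 1) * uu W (x 1) (x 2)) + integral\<^sup>L mu4 (\<lambda>x. uu W (x 0) (x 1) * uu W (x 2) (x 3)) + integral\<^sup>L mu4 (\<lambda>x. uu W (x 0) (x 1) * uu W (x 0) (x 3)) + integral\<^sup>L mu4 (\<lambda>x. uu W (x 1) (x 2) * uu W (x 2) (x 3)) + integral\<^sup>L mu4 (\<lambda>x. uu W (x 1) (x 2) * uu W (x 0) (x 3)) + integral\<^sup>L mu4 (\<lambda>x. uu W (x 2) (x 3) * uu W (x 0) (x 3)) + integral\<^sup>L mu4 (\<lambda>x. ((uu W (x 0) (x 1) * uu W (x 1) (x 2)) * uu W (x 2) (x 3)) * uu W (x 0) (x 3)))) / 8"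
proof -
  have "m_density 4 C4_edges W = integral\<^sup>L mu4 (\<lambda>x. W (x 0) (x 1) * (W (x 1) (x 2) * (W (x 2) (x 3) * W (x 0) (x 3)))) + integral\<^sup>L mu4 (\<lambda>x. (1 - W (x 0) (x 1)) * ((1 - W (x 1) (x 2)) * ((1 - W (x 2) (x 3)) * (1 - W (x 0) (x 3)))))"
    by (simp add: m_density_def hom_density_def mu4_def C4_edges_def)
  also have "\<dots> = integral\<^sup>L mu4 (\<lambda>x. W (x 0) (x 1) * (W (x 1) (x 2) * (W (x 2) (x 3) * W (x 0) (x 3))) + (1 - W (x 0) (x 1)) * ((1 - W (x 1) (x 2)) * ((1 - W (x 2) (x 3)) * (1 - W (x 0) (x 3)))))"
    by (rule Bochner_Integration.integral_add[symmetric]) (simp_all add: Bint_integrable Bint_W[OF gW])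
  also have "\<dots> = integral\<^sup>L mu4 (\<lambda>x. (1 + uu W (x 0) (x 1) * uu W (x 1) (x 2) + uu W (x 0) (x 1) * uu W (x 2) (x 3) + uu W (x 0) (x 1) * uu W (x 0) (x 3) + uu W (x 1) (x 2) * uu W (x 2) (x 3) + uu W (x 1) (x 2) * uu W (x 0) (x 3) + uu W (x 2) (x 3) * uu W (x 0) (x 3) + ((uu W (x 0) (x 1) * uu W (x 1) (x 2)) * uu W (x 2) (x 3)) * uu W (x 0) (x 3)) / 8)"
    by (rule Bochner_Integration.integral_cong[OF refl], unfold uu_def, rule poly4)
  also have "\<dots> = (1 + (integral\<^sup>L mu4 (\<lambda>x. uu W (x 0) (x 1) * uu W (x 1) (x 2)) + integral\<^sup>L mu4 (\<lambda>x. uu W (x 0) (x 1) * uu W (x 2) (x 3)) + integral\<^sup>L mu4 (\<lambda>x. uu W (x 0) (x 1) * uu W (x 0) (x 3)) + integral\<^sup>L mu4 (\<lambda>x. uu W (x 1) (x 2) * uu W (x 2) (x 3)) + integral\<^sup>L mu4 (\<lambda>x. uu W (x 1) (x 2) * uu W (x 0) (x 3)) + integral\<^sup>L mu4 (\<lambda>x. uu W (x 2) (x 3) * uu W (x 0) (x 3)) + integral\<^sup>L mu4 (\<lambda>x. ((uu W (x 0) (x 1) * uu W (x 1) (x 2)) * uu W (x 2) (x 3)) * uu W (x 0) (x 3)))) / 8"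
    by (simp add: Bint_integrable meas1)
  finally show ?thesis .
qed

lemma sumD: "integral\<^sup>L mu4 (\<lambda>x. uu W (x 0) (x 1) * uu W (x 1) (x 2)) + integral\<^sup>L mu4 (\<lambda>x. uu W (x 0) (x 1) * uu W (x 2) (x 3)) + integral\<^sup>L mu4 (\<lambda>x. uu W (x 0) (x 1) * uu W (x 0) (x 3)) + integral\<^sup>L mu4 (\<lambda>x. uu W (x 0) (x 1) * uu W (x 0) (x 2)) + integral\<^sup>L mu4 (\<lambda>x. uu W (x 1) (x 2) * uu W (x 2) (x 3)) + integral\<^sup>L mu4 (\<lambda>x. uu W (x 1) (x 2) * uu W (x 0) (x 3)) + integral\<^sup>L mu4 (\<lambda>x. uu W (x 1) (x 2) * uu W (x 0) (x 2)) + integral\<^sup>L mu4 (\<lambda>x. uu W (x 2) (x 3) * uu W (x 0) (x 3)) + integral\<^sup>L mu4 (\<lambda>x. uu W (x 2) (x 3) * uu W (x 0) (x 2)) + integral\<^sup>L mu4 (\<lambda>x. uu W (x 0) (x 3) * uu W (x 0) (x 2)) + integral\<^sup>L mu4 (\<lambda>x. ((uu W (x 1) (x 2) * uu W (x 2) (x 3)) * uu W (x 0) (x 3)) * uu W (x 0) (x 2)) + integral\<^sup>L mu4 (\<lambda>x. ((uu W (x 0) (x 1) * uu W (x 2) (x 3)) * uu W (x 0) (x 3)) * uu W (x 0) (x 2)) + integral\<^sup>L mu4 (\<lambda>x. ((uu W (x 0) (x 1) * uu W (x 1) (x 2)) * uu W (x 0) (x 3)) * uu W (x 0) (x 2)) +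 integral\<^sup>L mu4 (\<lambda>x. ((uu W (x 0) (x 1) * uu W (x 1) (x 2)) * uu W (x 2) (x 3)) * uu W (x 0) (x 2)) + integral\<^sup>L mu4 (\<lambda>x. ((uu W (x 0) (x 1) * uu W (x 1) (x 2)) * uu W (x 2) (x 3)) * uu W (x 0) (x 3)) = 8 * integral\<^sup>L mu4 (\<lambda>x. uu W (x 0) (x 1) * uu W (x 0) (x 2)) + 2 * integral\<^sup>L mu4 (\<lambda>x. uu W (x 0) (x 1) * uu W (x 2) (x 3)) + integral\<^sup>L mu4 (\<lambda>x. ((uu W (x 0) (x 1) * uu W (x 1) (x 2)) * uu W (x 2) (x 3)) * uu W (x 0) (x 3)) + 4 * integral\<^sup>L mu4 (\<lambda>x. (uu W (x 1) (x 2) * uu W (x 0) (x 2)) * (uu W (x 1) (x 0) * uu W (x 0) (x 3)))"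
  using id1 id2 id3 id4 id5 id6 id7 id8 id9 id10 id11 id12 id13 id14 id15 by linarith

lemma sumC: "integral\<^sup>L mu4 (\<lambda>x. uu W (x 0) (x 1) * uu W (x 1) (x 2)) + integral\<^sup>L mu4 (\<lambda>x. uu W (x 0) (x 1) * uu W (x 2) (x 3)) + integral\<^sup>L mu4 (\<lambda>x. uu W (x 0) (x 1) * uu W (x 0) (x 3)) + integral\<^sup>L mu4 (\<lambda>x. uu W (x 1) (x 2) * uu W (x 2) (x 3)) + integral\<^sup>L mu4 (\<lambda>x. uu W (x 1) (x 2) * uu W (x 0) (x 3)) + integral\<^sup>L mu4 (\<lambda>x. uu W (x 2) (x 3) * uu W (x 0) (x 3)) + integral\<^sup>L mu4 (\<lambda>x. ((uu W (x 0) (x 1) * uu W (x 1) (x 2)) * uu W (x 2) (x 3)) * uu W (x 0) (x 3)) = 4 * integral\<^sup>L mu4 (\<lambda>x. uu W (x 0) (x 1) * uu W (x 0) (x 2)) + 2 * integral\<^sup>L mu4 (\<lambda>x. uu W (x 0) (x 1) * uu W (x 2) (x 3)) + integral\<^sup>L mu4 (\<lambda>x. ((uu W (x 0) (x 1) * uu W (x 1) (x 2)) * uu W (x 2) (x 3)) * uu W (x 0) (x 3))"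
  using id1 id2 id3 id4 id5 id6 id7 id8 id9 id10 id11 id12 id13 id14 id15 by linarith

lemma Qp_eq: "integral\<^sup>L mu4 (\<lambda>x. (uu W (x 1) (x 2) * uu W (x 0) (x 2)) * (uu W (x 1) (x 3) * uu W (x 0) (x 3))) = integral\<^sup>L mu4 (\<lambda>x. ((uu W (x 0) (x 1) * uu W (x 1) (x 2)) * uu W (x 2) (x 3)) * uu W (x 0) (x 3))" using id1 id2 id3 id4 id5 id6 id7 id8 id9 id10 id11 id12 id13 id14 id15 by linarith
lemma Tb_eq: "integral\<^sup>L mu4 (\<lambda>x. (uu W (x 1) (x 0) * uu W (x 0) (x 2)) * (uu W (x 1) (x 3) * uu W (x 0) (x 3))) = integral\<^sup>L mu4 (\<lambda>x. (uu W (x 1) (x 2) * uu W (x 0) (x 2)) * (uu W (x 1) (x 0) * uu W (x 0) (x 3)))" using id1 id2 id3 id4 id5 id6 id7 id8 id9 id10 id11 id12 id13 id14 id15 by linarith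
lemma ch_eq: "integral\<^sup>L mu4 (\<lambda>x. uu W (x 0) (x 2) * uu W (x 0) (x 3)) = integral\<^sup>L mu4 (\<lambda>x. uu W (x 0) (x 1) * uu W (x 0) (x 2))" using id1 id2 id3 id4 id5 id6 id7 id8 id9 id10 id11 id12 id13 id14 id15 by linarith

end

lemma final_arith:
  fixes c s P E Q T R mD mC :: real
  assumes s: "s = 1 - 2*c" and s0: "0 < s" and K: "4/s \<le> 8 - 8*c"
    and F1: "0 \<le> s*Q + 4*T + 4/s*R" and F2: "R \<le> P" and F3: "0 \<le> P" and F4: "0 \<le> E"
    and c0: "0 \<le> c" and mD: "mD = (1 + (8*P + 2*E + Q + 4*T)) / 16"
    and mC: "mC = (1 + (4*P + 2*E + Q)) / 8"
  shows "mD - 1/16 \<ge> c * (mC - 1/8)"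
proof -
  have h2: "4/s*R \<le> 4/s*P" by (rule mult_left_mono[OF F2]) (use s0 in simp)
  have h3: "0 \<le> (8-8*c - 4/s)*P" by (rule mult_nonneg_nonneg) (use K F3 in simp_all)
  have h4: "0 \<le> (2-4*c)*E" by (rule mult_nonneg_nonneg) (use F4 s s0 in simp_all)
  define A where "A = (8-8*c)*P"
  define B where "B = (2-4*c)*E"
  define C where "C = s*Q"
  define D where "D = 4/s*R"
  define G where "G = 4/s*P"
  define Z where "Z = c*(mC - 1/8)"
  have h3': "(8-8*c - 4/s)*P = A - G" unfolding A_def G_def by (simp add: algebra_simps)
  have key: "16*(mD - 1/16) - 16*Z = A + B + C + 4*T"
    unfolding mD mC s A_def B_def C_def Z_def by (simp add: field_simps)
  have "D \<le> G" "0 \<le> A - G" "0 \<le> B" "0 \<le> C + 4*T + D"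
    using h2 h3 h3' h4 F1 unfolding A_def B_def C_def D_def G_def by auto
  then have "0 \<le> 16*(mD - 1/16) - 16*Z" unfolding key by linarith
  then show ?thesis unfolding Z_def by simp
qed
theorem lemma4p2:
  fixes c :: real and W :: "real \<Rightarrow> real \<Rightarrow> real"
  assumes "0 \<le> c" and "c \<le> (3 - sqrt 5) / 4"
    and "graphon W"
  shows "m_density 4 diamond_edges W - 1/16 \<ge> c * (m_density 4 C4_edges W - 1/8)"
proof -
  have gW: "graphon W" by (rule assms(3))
  have r5: "1 < sqrt 5" by (rule real_less_rsqrt) simp
  have s5: "sqrt 5 * sqrt 5 = (5::real)" by simp
  define s where "s = 1 - 2*c"
  have c4: "4 * c \<le> 3 - sqrt 5" using assms(2) by (simp add: field_simps)
  have s0: "0 < s" unfolding s_def using c4 r5 by linarith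
  have fac: "4*(4*c^2 - 6*c + 1) = (4*c - 3 + sqrt 5) * (4*c - 3 - sqrt 5)"
  proof -
    have e1: "(4*c - 3 + sqrt 5) * (4*c - 3 - sqrt 5) = (4*c-3)^2 - sqrt 5 * sqrt 5"
      by (simp only: algebra_simps power2_eq_square)
    have e2: "4*(4*c^2 - 6*c + 1) = (4*c-3)^2 - 5"
      by (simp add: algebra_simps power2_eq_square)
    show ?thesis unfolding e1 e2 s5 ..
  qed
  have "0 \<le> (4*c - 3 + sqrt 5) * (4*c - 3 - sqrt 5)"
    by (rule mult_nonpos_nonpos) (use c4 r5 in linarith)+
  then have "0 \<le> 4*(4*c^2 - 6*c + 1)" by (simp only: fac)
  then have quad: "0 \<le> 4*c^2 - 6*c + 1" by simp
  have i8: "(8-8*c)*(1-2*c) = 4 + 4*(4*c^2-6*c+1)" by (simp add: algebra_simps power2_eq_square)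
  have K: "4/s \<le> 8 - 8*c"
    unfolding pos_divide_le_eq[OF s0] unfolding s_def i8 using quad by simp
  have a2: "(sqrt s)^2 = s" using s0 by simp
  have ab: "sqrt s * (2 / sqrt s) = 2" using s0 by simp
  have b2: "(2 / sqrt s)^2 = 4/s" using s0 by (simp add: power_divide)
  have F1': "0 \<le> s * integral\<^sup>L mu4 (\<lambda>x. (uu W (x 1) (x 2) * uu W (x 0) (x 2)) * (uu W (x 1) (x 3) * uu W (x 0) (x 3))) + 2 * integral\<^sup>L mu4 (\<lambda>x. (uu W (x 1) (x 2) * uu W (x 0) (x 2)) * (uu W (x 1) (x 0) * uu W (x 0) (x 3))) + 2 * integral\<^sup>L mu4 (\<lambda>x. (uu W (x 1) (x 0) * uu W (x 0) (x 2)) * (uu W (x 1) (x 3) * uu W (x 0) (x 3))) + 4/s * integral\<^sup>L mu4 (\<lambda>x. (uu W (x 1) (x 0) * uu W (x 0) (x 2)) * (uu W (x 1) (x 0) * uu W (x 0) (x 3)))"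
    using F1[OF gW, of "sqrt s" "2 / sqrt s"] unfolding a2 ab b2 by simp
  have F1'': "0 \<le> s * integral\<^sup>L mu4 (\<lambda>x. ((uu W (x 0) (x 1) * uu W (x 1) (x 2)) * uu W (x 2) (x 3)) * uu W (x 0) (x 3)) + 4 * integral\<^sup>L mu4 (\<lambda>x. (uu W (x 1) (x 2) * uu W (x 0) (x 2)) * (uu W (x 1) (x 0) * uu W (x 0) (x 3))) + 4/s * integral\<^sup>L mu4 (\<lambda>x. (uu W (x 1) (x 0) * uu W (x 0) (x 2)) * (uu W (x 1) (x 0) * uu W (x 0) (x 3)))"
    using F1' Qp_eq[OF gW] Tb_eq[OF gW] by simp
  have F2': "integral\<^sup>L mu4 (\<lambda>x. (uu W (x 1) (x 0) * uu W (x 0) (x 2)) * (uu W (x 1) (x 0) * uu W (x 0) (x 3))) \<le> integral\<^sup>L mu4 (\<lambda>x. uu W (x 0) (x 1) * uu W (x 0) (x 2))" using F2[OF gW] ch_eq[OF gW] by simp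
  have F3': "0 \<le> integral\<^sup>L mu4 (\<lambda>x. uu W (x 0) (x 1) * uu W (x 0) (x 2))" using F3[OF gW] ch_eq[OF gW] by simp
  show ?thesis
    by (rule final_arith[OF s_def s0 K F1'' F2' F3' E_nonneg[OF gW] assms(1)])
       (simp only: mD[OF gW] sumD[OF gW], simp only: mC[OF gW] sumC[OF gW])
qed


end
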